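(* Let $\gamma\in\{\tfrac12,1,\dots\}$ and $j\in\{-\tfrac12,0,\tfrac12,\dots\}$ with $j\le\gamma-1$. Let $V_{j+1+\gamma}\subseteq F_\gamma\otimes D^+_j$ be the span of $|\gamma,\mu\rangle\otimes|j,j+1+\gamma-\mu\rangle$, $\mu\in\{-\gamma,\dots,\gamma\}$. Then the restriction of the Casimir $Q$ to $V_{j+1+\gamma}$ is not diagonalisable; consequently $Q$ is not diagonalisable on $F_\gamma\otimes D^+_j$.
   Context: Let $\mathfrak{spin}(2,1)_{\mathbb C}$ have basis $J_0,J_+,J_-$ with $[J_0,J_\pm]=\pm J_\pm$, $[J_+,J_-]=-2J_0$, and Casimir $Q=-J_0(J_0-1)+J_+J_-$. Set $\Gamma_\pm(j,m)=\mathrm i\sqrt{j\mp m}\,\sqrt{j\pm m+1}$. A module with basis $\{|j,m\rangle\}$ has action $J_0|j,m\rangle=m|j,m\rangle$, $J_\pm|j,m\rangle=\Gamma_\pm(j,m)|j,m\pm1\rangle$. The positive discrete series module $D^+_j$ has basis $|j,m\rangle$, $m\in\{j+1,j+2,\dots\}$; the finite-dimensional module $F_\gamma$ has basis $|\gamma,\mu\rangle$, $\mu\in\{-\gamma,\dots,\gamma\}$. On a tensor product the generators act as $J_0\otimes1+1\otimes J_0$, $J_\pm\otimes1+1\otimes J_\pm$. *)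

theory Defs
  imports Complex_Main
begin

text \<open>Vectors of F_gamma (x) D^+_j are represented as finitely supported functions
  from index pairs (mu, m) to complex coefficients; ket (mu,m) is |gamma,mu> (x) |j,m>.\<close>

definition Gp :: "real \<Rightarrow> real \<Rightarrow> complex" where
  "Gp j m = \<i> * csqrt (complex_of_real (j - m)) * csqrt (complex_of_real (j + m + 1))"

definition Gm :: "real \<Rightarrow> real \<Rightarrow> complex" where
  "Gm j m = \<i> * csqrt (complex_of_real (j + m)) * csqrt (complex_of_real (j - m + 1))"

definition ket :: "real \<times> real \<Rightarrow> (real \<times> real \<Rightarrow> complex)" where
  "ket b = (\<lambda>x. if x = b then 1 else 0)"

definition Fw :: "real \<Rightarrow> real set" where
  "Fw \<gamma> = {- \<gamma> + real k | k. real k \<le> 2 * \<gamma>}"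

definition Dw :: "real \<Rightarrow> real set" where
  "Dw j = {j + 1 + real k | k. True}"

definition J0b :: "real \<times> real \<Rightarrow> (real \<times> real \<Rightarrow> complex)" where
  "J0b b = (\<lambda>x. complex_of_real (fst b + snd b) * ket b x)"

definition Jpb :: "real \<Rightarrow> real \<Rightarrow> real \<times> real \<Rightarrow> (real \<times> real \<Rightarrow> complex)" where
  "Jpb \<gamma> j b = (\<lambda>x. Gp \<gamma> (fst b) * ket (fst b + 1, snd b) x
                     + Gp j (snd b) * ket (fst b, snd b + 1) x)"

definition Jmb :: "real \<Rightarrow> real \<Rightarrow> real \<times> real \<Rightarrow> (real \<times> real \<Rightarrow> complex)" where
  "Jmb \<gamma> j b = (\<lambda>x. Gm \<gamma> (fst b) * ket (fst b - 1, snd b) x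
                     + Gm j (snd b) * ket (fst b, snd b - 1) x)"

definition lin_ext :: "(real \<times> real \<Rightarrow> (real \<times> real \<Rightarrow> complex))
     \<Rightarrow> (real \<times> real \<Rightarrow> complex) \<Rightarrow> (real \<times> real \<Rightarrow> complex)" where
  "lin_ext T v = (\<lambda>x. \<Sum>b\<in>{b. v b \<noteq> 0}. v b * T b x)"

definition J0 :: "(real \<times> real \<Rightarrow> complex) \<Rightarrow> (real \<times> real \<Rightarrow> complex)" where
  "J0 = lin_ext J0b"

definition Jp :: "real \<Rightarrow> real \<Rightarrow> (real \<times> real \<Rightarrow> complex) \<Rightarrow> (real \<times> real \<Rightarrow> complex)" where
  "Jp \<gamma> j = lin_ext (Jpb \<gamma> j)"

definition Jm :: "real \<Rightarrow> real \<Rightarrow> (real \<times> real \<Rightarrow> complex) \<Rightarrow> (real \<times> real \<Rightarrow> complex)" where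
  "Jm \<gamma> j = lin_ext (Jmb \<gamma> j)"

definition Cas :: "real \<Rightarrow> real \<Rightarrow> (real \<times> real \<Rightarrow> complex) \<Rightarrow> (real \<times> real \<Rightarrow> complex)" where
  "Cas \<gamma> j v = (\<lambda>x. - (J0 (J0 v) x - J0 v x) + Jp \<gamma> j (Jm \<gamma> j v) x)"

definition TS :: "real \<Rightarrow> real \<Rightarrow> (real \<times> real \<Rightarrow> complex) set" where
  "TS \<gamma> j = {v. finite {b. v b \<noteq> 0} \<and> {b. v b \<noteq> 0} \<subseteq> Fw \<gamma> \<times> Dw j}"

definition fspan :: "(real \<times> real \<Rightarrow> complex) set \<Rightarrow> (real \<times> real \<Rightarrow> complex) set" where
  "fspan S = {v. \<exists>F c. finite F \<and> F \<subseteq> S \<and> v = (\<lambda>x. \<Sum>u\<in>F. c u * u x)}"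

definition Vsub :: "real \<Rightarrow> real \<Rightarrow> (real \<times> real \<Rightarrow> complex) set" where
  "Vsub \<gamma> j = fspan {ket (\<mu>, j + 1 + \<gamma> - \<mu>) | \<mu>. \<mu> \<in> Fw \<gamma>}"

definition eigvecs :: "((real \<times> real \<Rightarrow> complex) \<Rightarrow> (real \<times> real \<Rightarrow> complex))
     \<Rightarrow> (real \<times> real \<Rightarrow> complex) set \<Rightarrow> (real \<times> real \<Rightarrow> complex) set" where
  "eigvecs T W = {v \<in> W. v \<noteq> (\<lambda>x. 0) \<and> (\<exists>c. T v = (\<lambda>x. c * v x))}"

definition diagonalisable_on :: "(real \<times> real \<Rightarrow> complex) set
     \<Rightarrow> ((real \<times> real \<Rightarrow> complex) \<Rightarrow> (real \<times> real \<Rightarrow> complex)) \<Rightarrow> bool" where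
  "diagonalisable_on W T \<longleftrightarrow> W \<subseteq> fspan (eigvecs T W)"

end

theory Submission
  imports Defs
begin



type_synonym vec = "real \<times> real \<Rightarrow> complex"

definition JZ :: "vec \<Rightarrow> vec" where
  "JZ v = (\<lambda>x. complex_of_real (fst x + snd x) * v x)"
definition JP :: "real \<Rightarrow> real \<Rightarrow> vec \<Rightarrow> vec" where
  "JP g j v = (\<lambda>x. Gp g (fst x - 1) * v (fst x - 1, snd x) + Gp j (snd x - 1) * v (fst x, snd x - 1))"
definition JM :: "real \<Rightarrow> real \<Rightarrow> vec \<Rightarrow> vec" where
  "JM g j v = (\<lambda>x. Gp g (fst x) * v (fst x + 1, snd x) + Gp j (snd x) * v (fst x, snd x + 1))"
definition QQ :: "real \<Rightarrow> real \<Rightarrow> vec \<Rightarrow> vec" where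
  "QQ g j v = (\<lambda>x. - (JZ (JZ v) x - JZ v x) + JP g j (JM g j v) x)"

lemma Gm_Gp: "Gm a m = Gp a (m - 1)"
proof -
  have h1: "a - (m - 1) = a - m + 1" and h2: "a + (m - 1) + 1 = a + m" by simp_all
  show ?thesis unfolding Gm_def Gp_def h1 h2 by (simp add: mult_ac)
qed

lemma Gp_sq: "Gp a x * Gp a x = - complex_of_real ((a - x) * (a + x + 1))"
proof -
  have "Gp a x * Gp a x = (\<i> * \<i>) * (csqrt (complex_of_real (a - x)))\<^sup>2 * (csqrt (complex_of_real (a + x + 1)))\<^sup>2"
    unfolding Gp_def power2_eq_square by (simp only: mult_ac)
  also have "\<dots> = - complex_of_real ((a - x) * (a + x + 1))"
    by (simp only: power2_csqrt) (simp add: algebra_simps)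
  finally show ?thesis .
qed

lemma Gp_sq': "Gp a x * (Gp a x * y) = - complex_of_real ((a - x) * (a + x + 1)) * y"
  by (simp add: Gp_sq mult.assoc[symmetric])

lemma JZ_JP: "JZ (JP g j v) x = JP g j (JZ v) x + JP g j v x"
  unfolding JZ_def JP_def by (simp add: algebra_simps)

lemma JM_JP: "JM g j (JP g j v) x = JP g j (JM g j v) x + 2 * JZ v x"
  unfolding JZ_def JP_def JM_def 
  by (simp add: algebra_simps Gp_sq Gp_sq')

lemma QQ_JP: "QQ g j (JP g j v) = JP g j (QQ g j v)"
  unfolding QQ_def JZ_def JP_def JM_def 
  by (rule ext) (simp add: algebra_simps Gp_sq Gp_sq')

lemma sum_ket:
  assumes "finite S" "\<And>b. b \<notin> S \<Longrightarrow> v b = 0" "\<And>b. (f b = x) = (b = c)"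
  shows "(\<Sum>b\<in>S. v b * h b * ket (f b) x) = v c * h c"
proof -
  have "(\<Sum>b\<in>S. v b * h b * ket (f b) x) = (\<Sum>b\<in>S. if b = c then v b * h b else 0)"
    by (rule sum.cong) (auto simp: ket_def assms(3)[symmetric])
  also have "\<dots> = v c * h c" using assms(1,2) by (simp add: sum.delta)
  finally show ?thesis .
qed

definition fs :: "vec \<Rightarrow> bool" where "fs v \<longleftrightarrow> finite {b. v b \<noteq> 0}"

lemma lin_ext_JP: "fs v \<Longrightarrow> Jp g j v = JP g j v"
proof (rule ext)
  fix x assume "fs v"
  let ?S = "{b. v b \<noteq> 0}"
  have "Jp g j v x = (\<Sum>b\<in>?S. v b * Gp g (fst b) * ket (fst b + 1, snd b) x)
     + (\<Sum>b\<in>?S. v b * Gp j (snd b) * ket (fst b, snd b + 1) x)"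
    unfolding Jp_def lin_ext_def Jpb_def by (simp add: sum.distrib algebra_simps)
  also have "\<dots> = v (fst x - 1, snd x) * Gp g (fst x - 1) + v (fst x, snd x - 1) * Gp j (snd x - 1)"
    apply (subst sum_ket[where c = "(fst x - 1, snd x)"])
    using \<open>fs v\<close> apply (auto simp: fs_def)[3]
    apply (subst sum_ket[where c = "(fst x, snd x - 1)"])
    using \<open>fs v\<close> apply (auto simp: fs_def)[3]
    by simp
  finally show "Jp g j v x = JP g j v x" unfolding JP_def by (simp add: mult_ac)
qed

lemma lin_ext_JM: "fs v \<Longrightarrow> Jm g j v = JM g j v"
proof (rule ext)
  fix x assume "fs v"
  let ?S = "{b. v b \<noteq> 0}"
  have "Jm g j v x = (\<Sum>b\<in>?S. v b * Gm g (fst b) * ket (fst b - 1, snd b) x)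
     + (\<Sum>b\<in>?S. v b * Gm j (snd b) * ket (fst b, snd b - 1) x)"
    unfolding Jm_def lin_ext_def Jmb_def by (simp add: sum.distrib algebra_simps)
  also have "\<dots> = v (fst x + 1, snd x) * Gm g (fst x + 1) + v (fst x, snd x + 1) * Gm j (snd x + 1)"
    apply (subst sum_ket[where c = "(fst x + 1, snd x)"])
    using \<open>fs v\<close> apply (auto simp: fs_def)[3]
    apply (subst sum_ket[where c = "(fst x, snd x + 1)"])
    using \<open>fs v\<close> apply (auto simp: fs_def)[3]
    by simp
  finally show "Jm g j v x = JM g j v x" unfolding JM_def by (simp add: mult_ac Gm_Gp)
qed

lemma lin_ext_JZ: "fs v \<Longrightarrow> J0 v = JZ v"
proof (rule ext)
  fix x assume "fs v"
  let ?S = "{b. v b \<noteq> 0}"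
  have "J0 v x = (\<Sum>b\<in>?S. v b * complex_of_real (fst b + snd b) * ket b x)"
    unfolding J0_def lin_ext_def J0b_def by (simp add: algebra_simps)
  also have "\<dots> = v x * complex_of_real (fst x + snd x)"
    apply (subst sum_ket[where c = "x" and f = id, simplified])
    using \<open>fs v\<close> by (auto simp: fs_def)
  finally show "J0 v x = JZ v x" unfolding JZ_def by (simp add: mult_ac)
qed



lemma QQ_lin: "QQ g j (\<lambda>x. a * f x + b * h x) = (\<lambda>x. a * QQ g j f x + b * QQ g j h x)"
  unfolding QQ_def JZ_def JP_def JM_def 
  by (rule ext) (simp add: algebra_simps)

lemma QQ_0: "QQ g j (\<lambda>x. 0) = (\<lambda>x. 0)"
  unfolding QQ_def JZ_def JP_def JM_def by simp

definition LC :: "vec set \<Rightarrow> (vec \<Rightarrow> complex) \<Rightarrow> vec" where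
  "LC E a = (\<lambda>x. \<Sum>u\<in>E. a u * u x)"

definition Dc :: "real \<Rightarrow> real \<Rightarrow> complex \<Rightarrow> vec \<Rightarrow> vec" where
  "Dc g j c v = (\<lambda>x. QQ g j v x - c * v x)"

lemma QQ_LC': "finite E \<Longrightarrow> QQ g j (LC E a) = (\<lambda>x. \<Sum>u\<in>E. a u * QQ g j u x)"
proof (induction E rule: finite_induct)
  case empty
  then show ?case by (simp add: LC_def QQ_0)
next
  case (insert e E)
  have "LC (insert e E) a = (\<lambda>x. a e * e x + 1 * LC E a x)"
    using insert by (simp add: LC_def)
  then show ?case using insert QQ_lin[of g j "a e" e 1 "LC E a"] by simp
qed

lemma Dc_lin: "Dc g j c (\<lambda>x. a * f x + b * h x) = (\<lambda>x. a * Dc g j c f x + b * Dc g j c h x)"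
  unfolding Dc_def QQ_lin by (rule ext) (simp add: algebra_simps)

lemma Dc_comm: "Dc g j c (Dc g j k v) = Dc g j k (Dc g j c v)"
proof -
  have l: "QQ g j (\<lambda>x. QQ g j v x - k * v x) = (\<lambda>x. QQ g j (QQ g j v) x - k * QQ g j v x)" for k
    using QQ_lin[of g j 1 "QQ g j v" "-k" v] by simp
  show ?thesis by (simp add: Dc_def l algebra_simps)
qed

lemma Dc_0: "Dc g j c (\<lambda>x. 0) = (\<lambda>x. 0)"
  by (simp add: Dc_def QQ_0)




lemma key:
  assumes "finite E" "\<forall>e\<in>E. \<exists>k. QQ g j e = (\<lambda>x. k * e x)"
  shows "Dc g j c (Dc g j c (LC E a)) = (\<lambda>x. 0) \<Longrightarrow> Dc g j c (LC E a) = (\<lambda>x. 0)"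
  using assms
proof (induction E arbitrary: a rule: finite_induct)
  case empty
  then show ?case by (simp add: LC_def Dc_0)
next
  case (insert e E)
  obtain k where k: "QQ g j e = (\<lambda>x. k * e x)" using insert.prems(2) by auto
  have allE: "\<forall>e\<in>E. \<exists>k. QQ g j e = (\<lambda>x. k * e x)" using insert.prems(2) by auto
  have v: "LC (insert e E) a = (\<lambda>x. a e * e x + 1 * LC E a x)"
    using insert.hyps by (simp add: LC_def)
  have De: "Dc g j k e = (\<lambda>x. 0)" using k by (simp add: Dc_def)
  show ?case
  proof (cases "k = c")
    case True
    have eq: "Dc g j c (LC (insert e E) a) = Dc g j c (LC E a)"
      unfolding v Dc_lin using De True by simp
    have "Dc g j c (Dc g j c (LC E a)) = (\<lambda>x. 0)" using insert.prems(1) unfolding eq .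
    then show ?thesis unfolding eq using insert.IH[OF _ allE] by blast
  next
    case False
    define kk where "kk u = (SOME k. QQ g j u = (\<lambda>x. k * u x))" for u
    have kk: "QQ g j u = (\<lambda>x. kk u * u x)" if "u \<in> E" for u
      unfolding kk_def by (rule someI_ex) (use allE that in auto)
    have "Dc g j k (LC (insert e E) a) = Dc g j k (LC E a)"
      unfolding v Dc_lin using De by simp
    also have "\<dots> = LC E (\<lambda>u. a u * kk u - k * a u)"
    proof (rule ext)
      fix x
      have "Dc g j k (LC E a) x = (\<Sum>u\<in>E. a u * QQ g j u x) - k * (\<Sum>u\<in>E. a u * u x)"
        unfolding Dc_def using QQ_LC'[OF insert.hyps(1), of g j a] by (simp add: LC_def)
      also have "\<dots> = (\<Sum>u\<in>E. a u * kk u * u x) - (\<Sum>u\<in>E. k * a u * u x)"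
        by (simp add: kk sum_distrib_left mult_ac)
      also have "\<dots> = LC E (\<lambda>u. a u * kk u - k * a u) x"
        unfolding LC_def sum_subtractf[symmetric] by (simp add: algebra_simps)
      finally show "Dc g j k (LC E a) x = LC E (\<lambda>u. a u * kk u - k * a u) x" .
    qed
    finally have R: "Dc g j k (LC (insert e E) a) = LC E (\<lambda>u. a u * kk u - k * a u)" .
    have "Dc g j c (Dc g j c (Dc g j k (LC (insert e E) a))) = (\<lambda>x. 0)"
      unfolding Dc_comm[of g j c k] insert.prems(1) Dc_comm[of g j c k "Dc g j c _"]
      by (metis Dc_0 Dc_comm insert.prems(1))
    then have "Dc g j c (Dc g j c (LC E (\<lambda>u. a u * kk u - k * a u))) = (\<lambda>x. 0)"
      unfolding R .
    then have "Dc g j c (LC E (\<lambda>u. a u * kk u - k * a u)) = (\<lambda>x. 0)"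
      using insert.IH[OF _ allE] by blast
    then have h1: "Dc g j k (Dc g j c (LC (insert e E) a)) = (\<lambda>x. 0)"
      unfolding R[symmetric] Dc_comm[of g j c k] .
    have h2: "Dc g j c (Dc g j c (LC (insert e E) a)) = (\<lambda>x. 0)" by (rule insert.prems(1))
    show ?thesis
    proof (rule ext)
      fix x
      let ?w = "Dc g j c (LC (insert e E) a)"
      have "QQ g j ?w x - k * ?w x = 0" using fun_cong[OF h1, of x] by (simp add: Dc_def)
      moreover have "QQ g j ?w x - c * ?w x = 0" using fun_cong[OF h2, of x] by (simp add: Dc_def)
      ultimately have "(k - c) * ?w x = 0" by (simp add: algebra_simps)
      then show "?w x = 0" using False by simp
    qed
  qed
qed




lemma fs_JP: "fs v \<Longrightarrow> fs (JP g j v)"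
proof -
  assume "fs v"
  let ?S = "{b. v b \<noteq> 0}"
  have "{b. JP g j v b \<noteq> 0} \<subseteq> (\<lambda>b. (fst b + 1, snd b)) ` ?S \<union> (\<lambda>b. (fst b, snd b + 1)) ` ?S"
  proof
    fix x assume "x \<in> {b. JP g j v b \<noteq> 0}"
    then have "v (fst x - 1, snd x) \<noteq> 0 \<or> v (fst x, snd x - 1) \<noteq> 0" by (auto simp: JP_def)
    then show "x \<in> (\<lambda>b. (fst b + 1, snd b)) ` ?S \<union> (\<lambda>b. (fst b, snd b + 1)) ` ?S"
    proof
      assume "v (fst x - 1, snd x) \<noteq> 0"
      then show ?thesis by (intro UnI1 image_eqI[where x = "(fst x - 1, snd x)"]) auto
    next
      assume "v (fst x, snd x - 1) \<noteq> 0"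
      then show ?thesis by (intro UnI2 image_eqI[where x = "(fst x, snd x - 1)"]) auto
    qed
  qed
  then show ?thesis using \<open>fs v\<close> unfolding fs_def by (meson finite_Un finite_imageI finite_subset)
qed

lemma fs_JM: "fs v \<Longrightarrow> fs (JM g j v)"
proof -
  assume "fs v"
  let ?S = "{b. v b \<noteq> 0}"
  have "{b. JM g j v b \<noteq> 0} \<subseteq> (\<lambda>b. (fst b - 1, snd b)) ` ?S \<union> (\<lambda>b. (fst b, snd b - 1)) ` ?S"
  proof
    fix x assume "x \<in> {b. JM g j v b \<noteq> 0}"
    then have "v (fst x + 1, snd x) \<noteq> 0 \<or> v (fst x, snd x + 1) \<noteq> 0" by (auto simp: JM_def)
    then show "x \<in> (\<lambda>b. (fst b - 1, snd b)) ` ?S \<union> (\<lambda>b. (fst b, snd b - 1)) ` ?S"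
    proof
      assume "v (fst x + 1, snd x) \<noteq> 0"
      then show ?thesis by (intro UnI1 image_eqI[where x = "(fst x + 1, snd x)"]) auto
    next
      assume "v (fst x, snd x + 1) \<noteq> 0"
      then show ?thesis by (intro UnI2 image_eqI[where x = "(fst x, snd x + 1)"]) auto
    qed
  qed
  then show ?thesis using \<open>fs v\<close> unfolding fs_def by (meson finite_Un finite_imageI finite_subset)
qed

lemma fs_JZ: "fs v \<Longrightarrow> fs (JZ v)"
  unfolding fs_def JZ_def by (rule finite_subset[rotated]) auto

lemma Cas_QQ: "fs v \<Longrightarrow> Cas g j v = QQ g j v"
  unfolding Cas_def QQ_def
  by (simp add: lin_ext_JZ lin_ext_JM lin_ext_JP fs_JZ fs_JM)

lemma nondiag:
  assumes "\<forall>w\<in>W. fs w" "x \<in> fspan (eigvecs (Cas g j) W)"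
    "Dc g j c (Dc g j c x) = (\<lambda>x. 0)"
  shows "Dc g j c x = (\<lambda>x. 0)"
proof -
  obtain F a where F: "finite F" "F \<subseteq> eigvecs (Cas g j) W" "x = (\<lambda>y. \<Sum>u\<in>F. a u * u y)"
    using assms(2) unfolding fspan_def by blast
  have x: "x = LC F a" using F(3) by (simp add: LC_def)
  have "\<forall>e\<in>F. \<exists>k. QQ g j e = (\<lambda>x. k * e x)"
  proof
    fix e assume "e \<in> F"
    then have "e \<in> W" "\<exists>k. Cas g j e = (\<lambda>x. k * e x)" using F(2) unfolding eigvecs_def by auto
    then show "\<exists>k. QQ g j e = (\<lambda>x. k * e x)" using assms(1) Cas_QQ by metis
  qed
  then show ?thesis using key[OF F(1)] assms(3) unfolding x by blast
qed




definition wt :: "vec \<Rightarrow> real \<Rightarrow> bool" where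
  "wt v w \<longleftrightarrow> (\<forall>b. v b \<noteq> 0 \<longrightarrow> fst b + snd b = w)"

lemma JP_0: "JP g j (\<lambda>x. 0) = (\<lambda>x. 0)" by (simp add: JP_def)
lemma JPpow_0: "(JP g j ^^ m) (\<lambda>x. 0) = (\<lambda>x. 0)" by (induction m) (simp_all add: JP_0)

lemma Dc_JP: "Dc g j c (JP g j v) = JP g j (Dc g j c v)"
  by (simp add: Dc_def QQ_JP) (simp add: JP_def algebra_simps)

lemma Dc_JPpow: "Dc g j c ((JP g j ^^ m) v) = (JP g j ^^ m) (Dc g j c v)"
  by (induction m) (simp_all add: Dc_JP)

lemma wt_JP: "wt v w \<Longrightarrow> wt (JP g j v) (w + 1)"
proof -
  assume h: "wt v w"
  show ?thesis unfolding wt_def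
  proof (intro allI impI)
    fix b assume "JP g j v b \<noteq> 0"
    then have "v (fst b - 1, snd b) \<noteq> 0 \<or> v (fst b, snd b - 1) \<noteq> 0" by (auto simp: JP_def)
    then show "fst b + snd b = w + 1"
    proof
      assume "v (fst b - 1, snd b) \<noteq> 0"
      then have "fst b - 1 + snd b = w" using h unfolding wt_def by force
      then show ?thesis by simp
    next
      assume "v (fst b, snd b - 1) \<noteq> 0"
      then have "fst b + (snd b - 1) = w" using h unfolding wt_def by force
      then show ?thesis by simp
    qed
  qed
qed

lemma wt_JPpow: "wt v w \<Longrightarrow> wt ((JP g j ^^ m) v) (w + real m)"
proof (induction m)
  case 0 then show ?case by simp
next
  case (Suc m)
  then have "wt (JP g j ((JP g j ^^ m) v)) (w + real m + 1)" by (intro wt_JP) simp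
  moreover have "w + real m + 1 = w + real (Suc m)" by simp
  ultimately show ?case by simp
qed

lemma JZ_wt: "wt v w \<Longrightarrow> JZ v = (\<lambda>x. complex_of_real w * v x)"
  unfolding wt_def JZ_def by (rule ext) (metis mult_zero_right)

lemma fs_sum: "finite F \<Longrightarrow> \<forall>u\<in>F. fs u \<Longrightarrow> fs (\<lambda>x. \<Sum>u\<in>F. c u * u x)"
proof -
  assume F: "finite F" "\<forall>u\<in>F. fs u"
  have "{x. (\<Sum>u\<in>F. c u * u x) \<noteq> 0} \<subseteq> (\<Union>u\<in>F. {b. u b \<noteq> 0})"
  proof
    fix x assume "x \<in> {x. (\<Sum>u\<in>F. c u * u x) \<noteq> 0}"
    then obtain u where "u \<in> F" "c u * u x \<noteq> 0" by (auto elim: sum.not_neutral_contains_not_neutral)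
    then show "x \<in> (\<Union>u\<in>F. {b. u b \<noteq> 0})" by auto
  qed
  moreover have "finite (\<Union>u\<in>F. {b. u b \<noteq> 0})" using F unfolding fs_def by auto
  ultimately show ?thesis unfolding fs_def by (rule finite_subset)
qed

lemma fs_ket: "fs (ket b)"
  unfolding fs_def ket_def by (rule finite_subset[of _ "{b}"]) auto

lemma Gp_top: "Gp a a = 0" by (simp add: Gp_def)
lemma Gp_bot: "Gp a (- a - 1) = 0" by (simp add: Gp_def)

locale cfg =
  fixes N :: nat and kk :: int
  assumes N1: "N \<ge> 1" and kkl: "kk \<ge> -1" and kku: "kk \<le> int N - 2"
begin

abbreviation "g \<equiv> real N / 2"
abbreviation "j \<equiv> real_of_int kk / 2"

lemma TS_JP: "v \<in> TS g j \<Longrightarrow> JP g j v \<in> TS g j"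
proof -
  assume v: "v \<in> TS g j"
  have fsv: "fs v" using v by (simp add: TS_def fs_def)
  have "{b. JP g j v b \<noteq> 0} \<subseteq> Fw g \<times> Dw j"
  proof
    fix x assume "x \<in> {b. JP g j v b \<noteq> 0}"
    then have "Gp g (fst x - 1) * v (fst x - 1, snd x) \<noteq> 0 \<or> Gp j (snd x - 1) * v (fst x, snd x - 1) \<noteq> 0"
      by (auto simp: JP_def)
    then show "x \<in> Fw g \<times> Dw j"
    proof
      assume h: "Gp g (fst x - 1) * v (fst x - 1, snd x) \<noteq> 0"
      then have "(fst x - 1, snd x) \<in> Fw g \<times> Dw j" using v by (auto simp: TS_def)
      then obtain k where k: "fst x - 1 = - g + real k" "real k \<le> 2 * g" "snd x \<in> Dw j"
        unfolding Fw_def by auto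
      have "k \<noteq> N" using h k Gp_top[of g] by auto
      then have "real (k + 1) \<le> 2 * g" using k by simp
      moreover have "fst x = - g + real (k + 1)" using k by simp
      ultimately have "fst x \<in> Fw g" unfolding Fw_def by blast
      then show ?thesis using k(3) by (simp add: mem_Times_iff)
    next
      assume h: "Gp j (snd x - 1) * v (fst x, snd x - 1) \<noteq> 0"
      then have "(fst x, snd x - 1) \<in> Fw g \<times> Dw j" using v by (auto simp: TS_def)
      then obtain k where k: "snd x - 1 = j + 1 + real k" "fst x \<in> Fw g"
        unfolding Dw_def by auto
      have "snd x = j + 1 + real (k + 1)" using k by simp
      then have "snd x \<in> Dw j" unfolding Dw_def by blast
      then show ?thesis using k(2) by (simp add: mem_Times_iff)
    qed
  qed
  then show ?thesis using fs_JP[OF fsv] by (simp add: TS_def fs_def)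
qed

lemma TS_JPpow: "v \<in> TS g j \<Longrightarrow> (JP g j ^^ m) v \<in> TS g j"
  by (induction m) (simp_all add: TS_JP)

lemma JP_inj: "v \<in> TS g j \<Longrightarrow> v \<noteq> (\<lambda>x. 0) \<Longrightarrow> JP g j v \<noteq> (\<lambda>x. 0)"
proof -
  assume v: "v \<in> TS g j" and nz: "v \<noteq> (\<lambda>x. 0)"
  let ?S = "{b. v b \<noteq> 0}"
  have fin: "finite ?S" and sub: "?S \<subseteq> Fw g \<times> Dw j" using v by (auto simp: TS_def)
  have ne: "?S \<noteq> {}" using nz by auto
  define mq where "mq = Max (snd ` ?S)"
  have "mq \<in> snd ` ?S" unfolding mq_def using fin ne by (intro Max_in) auto
  then obtain b where b: "v b \<noteq> 0" "snd b = mq" by auto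
  have le: "snd b' \<le> mq" if "v b' \<noteq> 0" for b'
    unfolding mq_def using fin that by (intro Max_ge) auto
  have z: "v (fst b - 1, mq + 1) = 0" using le[of "(fst b - 1, mq + 1)"] by force
  have "mq \<in> Dw j" using b sub by auto
  then obtain k where k: "mq = j + 1 + real k" unfolding Dw_def by auto
  have j1: "j \<ge> -1/2" using kkl by simp
  have "Gp j mq \<noteq> 0" unfolding Gp_def using k j1 by simp
  then have "JP g j v (fst b, mq + 1) \<noteq> 0" using z b unfolding JP_def by (cases b) simp
  then show ?thesis by (metis)
qed

lemma JPpow_inj: "v \<in> TS g j \<Longrightarrow> v \<noteq> (\<lambda>x. 0) \<Longrightarrow> (JP g j ^^ m) v \<noteq> (\<lambda>x. 0)"
  by (induction m) (simp_all add: JP_inj TS_JPpow)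

end




lemma ket_inj: "inj ket"
proof (rule injI)
  fix a b assume "ket a = ket b"
  then have "ket a a = ket b a" by simp
  then show "a = b" by (simp add: ket_def split: if_splits)
qed

lemma TS_wt_Vsub:
  assumes "v \<in> TS g j" "wt v (j + 1 + g)"
  shows "v \<in> Vsub g j"
proof -
  let ?S = "{b. v b \<noteq> 0}"
  have fin: "finite ?S" and sub: "?S \<subseteq> Fw g \<times> Dw j" using assms(1) by (auto simp: TS_def)
  define a where "a u = v (inv ket u)" for u
  have "v = (\<lambda>x. \<Sum>u\<in>ket ` ?S. a u * u x)"
  proof (rule ext)
    fix x
    have "(\<Sum>u\<in>ket ` ?S. a u * u x) = (\<Sum>b\<in>?S. a (ket b) * ket b x)"
      by (subst sum.reindex) (use ket_inj in \<open>auto simp: inj_on_def\<close>)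
    also have "\<dots> = (\<Sum>b\<in>?S. if b = x then v b else 0)"
      unfolding a_def inv_f_f[OF ket_inj] by (rule sum.cong) (auto simp: ket_def)
    also have "\<dots> = v x" using fin by (simp add: sum.delta')
    finally show "v x = (\<Sum>u\<in>ket ` ?S. a u * u x)" by simp
  qed
  moreover have "ket ` ?S \<subseteq> {ket (\<mu>, j + 1 + g - \<mu>) | \<mu>. \<mu> \<in> Fw g}"
  proof
    fix u assume "u \<in> ket ` ?S"
    then obtain b where b: "b \<in> ?S" "u = ket b" by auto
    have "fst b + snd b = j + 1 + g" using assms(2) b unfolding wt_def by auto
    then have "b = (fst b, j + 1 + g - fst b)" by (cases b) auto
    moreover have "fst b \<in> Fw g" using b sub by auto
    ultimately have "u = ket (fst b, j + 1 + g - fst b)" "fst b \<in> Fw g" using b by metis+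
    then show "u \<in> {ket (\<mu>, j + 1 + g - \<mu>) | \<mu>. \<mu> \<in> Fw g}" by blast
  qed
  ultimately show ?thesis unfolding Vsub_def fspan_def using fin by blast
qed

lemma Vsub_fs: "w \<in> Vsub g j \<Longrightarrow> fs w"
proof -
  assume "w \<in> Vsub g j"
  then obtain F c where F: "finite F" "F \<subseteq> {ket (\<mu>, j + 1 + g - \<mu>) | \<mu>. \<mu> \<in> Fw g}"
     "w = (\<lambda>x. \<Sum>u\<in>F. c u * u x)" unfolding Vsub_def fspan_def by blast
  have "\<forall>u\<in>F. fs u" using F(2) fs_ket by blast
  then show ?thesis using fs_sum[OF F(1)] F(3) by simp
qed

lemma TS_fs: "w \<in> TS g j \<Longrightarrow> fs w" by (simp add: TS_def fs_def)

context cfg begin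

definition "nn = nat (int N - kk - 1)"
definition "lam = g - j"
definition "u0 = ket (-g, j + 1)"
definition "zz = (JP g j ^^ (nn - 1)) u0"
definition "cc = - complex_of_real (lam^2 - lam)"

primrec YY :: "nat \<Rightarrow> complex" where
  "YY 0 = 0"
| "YY (Suc i) = (zz (-g + real i, lam - 1 + g - real i) - Gp j (lam - 1 + g - real i) * YY i) / Gp g (-g + real i)"

definition "yy = (\<lambda>x. if fst x + snd x = lam \<and> (\<exists>i\<le>nn. fst x + g = real i) then YY (nat \<lfloor>fst x + g\<rfloor>) else 0)"
definition "XX = (JP g j ^^ nat (kk + 1)) yy"

lemma nn_real: "real nn = real N - real_of_int kk - 1" and nn1: "nn \<ge> 1" and nnN: "nn \<le> N"
  using kku kkl unfolding nn_def by auto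

lemma u0_TS: "u0 \<in> TS g j"
proof -
  have "{b. u0 b \<noteq> 0} = {(-g, j+1)}" by (auto simp: u0_def ket_def)
  moreover have "-g \<in> Fw g" unfolding Fw_def by (auto intro!: exI[of _ 0])
  moreover have "j + 1 \<in> Dw j" unfolding Dw_def by (auto intro!: exI[of _ 0])
  ultimately show ?thesis unfolding TS_def by auto
qed

lemma u0_nz: "u0 \<noteq> (\<lambda>x. 0)"
  unfolding u0_def ket_def by (metis one_neq_zero)

lemma u0_wt: "wt u0 (1 - lam)"
  unfolding wt_def u0_def ket_def lam_def by auto

lemma JM_u0: "JM g j u0 = (\<lambda>x. 0)"
proof (rule ext)
  fix x
  have a: "Gp g (fst x) * u0 (fst x + 1, snd x) = 0"
  proof (cases "fst x = -g - 1")
    case True then show ?thesis by (simp add: Gp_bot)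
  next
    case False then have "(fst x + 1, snd x) \<noteq> (-g, j + 1)" by auto
    then show ?thesis by (auto simp: u0_def ket_def)
  qed
  have b: "Gp j (snd x) * u0 (fst x, snd x + 1) = 0"
  proof (cases "snd x = j")
    case True then have "Gp j (snd x) = 0" by (simp only: Gp_top)
    then show ?thesis by simp
  next
    case False then have "(fst x, snd x + 1) \<noteq> (-g, j + 1)" by auto
    then show ?thesis by (auto simp: u0_def ket_def)
  qed
  show "JM g j u0 x = 0" unfolding JM_def by (simp only: a b) simp
qed

lemma Dc_u0: "Dc g j cc u0 = (\<lambda>x. 0)"
proof -
  have z: "JZ u0 = (\<lambda>x. complex_of_real (1 - lam) * u0 x)" by (rule JZ_wt[OF u0_wt])
  have h: "JZ (\<lambda>x. c * u0 x) = (\<lambda>x. c * JZ u0 x)" for c by (simp add: JZ_def fun_eq_iff algebra_simps)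
  have zz: "JZ (\<lambda>x. complex_of_real (1 - lam) * u0 x) = (\<lambda>x. complex_of_real (1 - lam) * (complex_of_real (1 - lam) * u0 x))"
    by (simp only: h z)
  show ?thesis
  proof (rule ext)
    fix x
    have "QQ g j u0 x = -(JZ (JZ u0) x - JZ u0 x) + JP g j (JM g j u0) x" by (simp add: QQ_def)
    also have "\<dots> = -(complex_of_real (1 - lam) * (complex_of_real (1 - lam) * u0 x) - complex_of_real (1 - lam) * u0 x)"
      by (simp only: z zz JM_u0 JP_0) simp
    finally show "Dc g j cc u0 x = 0" by (simp add: Dc_def cc_def algebra_simps power2_eq_square)
  qed
qed

end




context cfg begin

lemma zz_TS: "zz \<in> TS g j" unfolding zz_def by (rule TS_JPpow[OF u0_TS])
lemma zz_nz: "zz \<noteq> (\<lambda>x. 0)" unfolding zz_def by (rule JPpow_inj[OF u0_TS u0_nz])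
lemma zz_wt: "wt zz (lam - 1)"
proof -
  have "wt zz (1 - lam + real (nn - 1))" unfolding zz_def by (rule wt_JPpow[OF u0_wt])
  moreover have "1 - lam + real (nn - 1) = lam - 1" using nn1 nn_real by (simp add: of_nat_diff lam_def)
  ultimately show ?thesis by metis
qed

lemma zz_supp: "zz b \<noteq> 0 \<Longrightarrow> fst b \<in> Fw g \<and> snd b \<in> Dw j \<and> fst b + snd b = lam - 1"
  using zz_TS zz_wt unfolding TS_def wt_def by auto

lemma Dw_gt: "q \<in> Dw j \<Longrightarrow> q > j" unfolding Dw_def by auto

lemma yy_at: "i \<le> nn \<Longrightarrow> yy (-g + real i, lam + g - real i) = YY i"
  unfolding yy_def by auto

lemma yy_wt0: "fst x + snd x \<noteq> lam \<Longrightarrow> yy x = 0" unfolding yy_def by auto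
lemma yy_idx0: "\<not> (\<exists>i\<le>nn. fst x + g = real i) \<Longrightarrow> yy x = 0" unfolding yy_def by auto

lemma yy_supp: "yy b \<noteq> 0 \<Longrightarrow> \<exists>i\<le>nn. b = (-g + real i, lam + g - real i)"
proof -
  assume h: "yy b \<noteq> 0"
  then have "fst b + snd b = lam" using yy_wt0 by blast
  moreover obtain i where "i \<le> nn" "fst b + g = real i" using h yy_idx0 by blast
  ultimately show ?thesis by (intro exI[of _ i]) (cases b, auto)
qed

lemma yy_wt: "wt yy lam" unfolding wt_def using yy_wt0 by blast

lemma yy_TS: "yy \<in> TS g j"
proof -
  have sub: "{b. yy b \<noteq> 0} \<subseteq> (\<lambda>i. (-g + real i, lam + g - real i)) ` {..nn}"
    using yy_supp by blast
  have "(\<lambda>i. (-g + real i, lam + g - real i)) ` {..nn} \<subseteq> Fw g \<times> Dw j"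
  proof
    fix b assume "b \<in> (\<lambda>i. (-g + real i, lam + g - real i)) ` {..nn}"
    then obtain i where i: "i \<le> nn" "b = (-g + real i, lam + g - real i)" by auto
    have "real i \<le> 2 * g" using i nnN by simp
    then have "fst b \<in> Fw g" unfolding Fw_def using i by auto
    moreover have "snd b = j + 1 + real (nn - i)" using i nn_real by (simp add: of_nat_diff lam_def)
    then have "snd b \<in> Dw j" unfolding Dw_def by blast
    ultimately show "b \<in> Fw g \<times> Dw j" by (simp add: mem_Times_iff)
  qed
  then show ?thesis using sub unfolding TS_def by (auto intro: finite_subset)
qed

lemma Gp_g_nz: "i < nn \<Longrightarrow> Gp g (-g + real i) \<noteq> 0"
proof -
  assume "i < nn"
  then have "real i < real N" using nnN by simp
  then show ?thesis unfolding Gp_def by simp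
qed

lemma JM_yy: "JM g j yy = zz"
proof (rule ext)
  fix x :: "real \<times> real"
  obtain p q where x: "x = (p, q)" by (cases x)
  have JMx: "JM g j yy x = Gp g p * yy (p + 1, q) + Gp j q * yy (p, q + 1)"
    unfolding JM_def x by simp
  show "JM g j yy x = zz x"
  proof (cases "p + q = lam - 1")
    case False
    then have "yy (p + 1, q) = 0" "yy (p, q + 1) = 0" by (auto intro!: yy_wt0)
    moreover have "zz x = 0" using False zz_supp x by force
    ultimately show ?thesis using JMx by simp
  next
    case wq: True
    show ?thesis
    proof (cases "\<exists>i<nn. p + g = real i")
      case True
      then obtain i where i: "i < nn" "p + g = real i" by blast
      have pq: "p = -g + real i" "q = lam - 1 + g - real i" using i wq by auto
      have e1: "(p + 1, q) = (-g + real (Suc i), lam + g - real (Suc i))" using pq by simp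
      have e2: "(p, q + 1) = (-g + real i, lam + g - real i)" using pq by simp
      have y1: "yy (p + 1, q) = YY (Suc i)" unfolding e1 using i by (intro yy_at) simp
      have y2: "yy (p, q + 1) = YY i" unfolding e2 using i by (intro yy_at) simp
      have nz: "Gp g p \<noteq> 0" unfolding pq(1) using i(1) by (rule Gp_g_nz)
      have "JM g j yy x = Gp g p * YY (Suc i) + Gp j q * YY i" using JMx y1 y2 by simp
      also have "\<dots> = zz (p, q)" using nz unfolding pq by simp
      finally show ?thesis using x by simp
    next
      case False
      show ?thesis
      proof (cases "p + g = real nn")
        case True
        have "\<not> (\<exists>i\<le>nn. p + 1 + g = real i)"
        proof
          assume "\<exists>i\<le>nn. p + 1 + g = real i"
          then obtain i where "i \<le> nn" "real nn + 1 = real i" using True by auto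
          then show False by linarith
        qed
        then have y1: "yy (p + 1, q) = 0" by (intro yy_idx0) simp
        have qj: "q = j" using True wq nn_real by (simp add: lam_def)
        have "Gp j q = 0" unfolding qj by (rule Gp_top)
        moreover have "zz x = 0" using zz_supp[of x] Dw_gt qj x by force
        ultimately show ?thesis using JMx y1 by simp
      next
        case False2: False
        have n0: "\<not> (\<exists>i\<le>nn. p + g = real i)"
          using False False2 by (metis le_neq_implies_less)
        then have y2: "yy (p, q + 1) = 0" by (intro yy_idx0) simp
        have y1: "yy (p + 1, q) = 0"
        proof (cases "\<exists>i\<le>nn. p + 1 + g = real i")
          case True
          then obtain i where i: "i \<le> nn" "p + 1 + g = real i" by blast
          show ?thesis
          proof (cases i)
            case 0
            then have "nat \<lfloor>p + 1 + g\<rfloor> = 0" using i by simp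
            then show ?thesis unfolding yy_def by simp
          next
            case (Suc i')
            then have "p + g = real i'" "i' \<le> nn" using i by auto
            then show ?thesis using n0 by blast
          qed
        next
          case False
          then show ?thesis by (intro yy_idx0) simp
        qed
        have "zz x = 0"
        proof (rule ccontr)
          assume "zz x \<noteq> 0"
          then have h: "p \<in> Fw g" "q \<in> Dw j" using zz_supp x by auto
          obtain k where k: "p = -g + real k" using h(1) unfolding Fw_def by auto
          obtain l where l: "q = j + 1 + real l" using h(2) unfolding Dw_def by auto
          have "real (k + l + 1) = real nn" using k l wq nn_real by (simp add: lam_def)
          then have "k + l + 1 = nn" using of_nat_eq_iff by blast
          then have "k \<le> nn" "p + g = real k" using k by auto
          then show False using n0 by blast
        qed
        then show ?thesis using JMx y1 y2 by simp
      qed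
    qed
  qed
qed

end




context cfg begin

lemma Dc_yy: "Dc g j cc yy = JP g j zz"
proof -
  have z: "JZ yy = (\<lambda>x. complex_of_real lam * yy x)" by (rule JZ_wt[OF yy_wt])
  have h: "JZ (\<lambda>x. c * yy x) = (\<lambda>x. c * JZ yy x)" for c by (simp add: JZ_def fun_eq_iff algebra_simps)
  have zz': "JZ (\<lambda>x. complex_of_real lam * yy x) = (\<lambda>x. complex_of_real lam * (complex_of_real lam * yy x))"
    by (simp only: h z)
  show ?thesis
  proof (rule ext)
    fix x
    have "QQ g j yy x = -(JZ (JZ yy) x - JZ yy x) + JP g j (JM g j yy) x" by (simp add: QQ_def)
    also have "\<dots> = -(complex_of_real lam * (complex_of_real lam * yy x) - complex_of_real lam * yy x) + JP g j zz x"
      by (simp only: z zz' JM_yy)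
    finally show "Dc g j cc yy x = JP g j zz x" by (simp add: Dc_def cc_def algebra_simps power2_eq_square)
  qed
qed

lemma XX_TS: "XX \<in> TS g j" unfolding XX_def by (rule TS_JPpow[OF yy_TS])

lemma XX_Vsub: "XX \<in> Vsub g j"
proof (rule TS_wt_Vsub[OF XX_TS])
  have "wt XX (lam + real (nat (kk + 1)))" unfolding XX_def by (rule wt_JPpow[OF yy_wt])
  moreover have "lam + real (nat (kk + 1)) = j + 1 + g" using kkl by (simp add: lam_def)
  ultimately show "wt XX (j + 1 + g)" by metis
qed

lemma D1: "Dc g j cc XX \<noteq> (\<lambda>x. 0)"
proof -
  have "Dc g j cc XX = (JP g j ^^ nat (kk + 1)) (JP g j zz)"
    unfolding XX_def Dc_JPpow Dc_yy ..
  moreover have "JP g j zz \<in> TS g j" by (rule TS_JP[OF zz_TS])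
  moreover have "JP g j zz \<noteq> (\<lambda>x. 0)" by (rule JP_inj[OF zz_TS zz_nz])
  ultimately show ?thesis using JPpow_inj by simp
qed

lemma D2: "Dc g j cc (Dc g j cc XX) = (\<lambda>x. 0)"
proof -
  have "Dc g j cc zz = (\<lambda>x. 0)" unfolding zz_def Dc_JPpow Dc_u0 JPpow_0 ..
  then show ?thesis unfolding XX_def Dc_JPpow Dc_yy Dc_JP by (simp add: JP_0 JPpow_0)
qed

end

theorem mainTheorem6:
  fixes \<gamma> j :: real
  assumes "\<exists>n::nat. n \<ge> 1 \<and> \<gamma> = real n / 2"
    and "\<exists>k::int. k \<ge> -1 \<and> j = real_of_int k / 2"
    and "j \<le> \<gamma> - 1"
  shows "\<not> diagonalisable_on (Vsub \<gamma> j) (Cas \<gamma> j) \<and> \<not> diagonalisable_on (TS \<gamma> j) (Cas \<gamma> j)"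
proof -
  obtain N :: nat where N: "N \<ge> 1" "\<gamma> = real N / 2" using assms(1) by blast
  obtain kk :: int where kk: "kk \<ge> -1" "j = real_of_int kk / 2" using assms(2) by blast
  have "real_of_int kk \<le> real_of_int (int N - 2)" using assms(3) N kk by simp
  then have kku: "kk \<le> int N - 2" by (simp only: of_int_le_iff)
  interpret cfg N kk using N(1) kk(1) kku by unfold_locales
  show ?thesis unfolding N(2) kk(2) diagonalisable_on_def
  proof
    show "\<not> Vsub (real N / 2) (real_of_int kk / 2) \<subseteq> fspan (eigvecs (Cas (real N / 2) (real_of_int kk / 2)) (Vsub (real N / 2) (real_of_int kk / 2)))"
    proof
      assume h: "Vsub (real N / 2) (real_of_int kk / 2) \<subseteq> fspan (eigvecs (Cas (real N / 2) (real_of_int kk / 2)) (Vsub (real N / 2) (real_of_int kk / 2)))"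
      have "XX \<in> fspan (eigvecs (Cas (real N / 2) (real_of_int kk / 2)) (Vsub (real N / 2) (real_of_int kk / 2)))"
        (is "XX \<in> ?F") using h XX_Vsub by blast
      moreover have "\<forall>w\<in>Vsub (real N / 2) (real_of_int kk / 2). fs w" using Vsub_fs by blast
      ultimately have "Dc (real N / 2) (real_of_int kk / 2) cc XX = (\<lambda>x. 0)"
        using nondiag D2 by blast
      then show False using D1 by simp
    qed
    show "\<not> TS (real N / 2) (real_of_int kk / 2) \<subseteq> fspan (eigvecs (Cas (real N / 2) (real_of_int kk / 2)) (TS (real N / 2) (real_of_int kk / 2)))"
    proof
      assume h: "TS (real N / 2) (real_of_int kk / 2) \<subseteq> fspan (eigvecs (Cas (real N / 2) (real_of_int kk / 2)) (TS (real N / 2) (real_of_int kk / 2)))"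
      have "XX \<in> fspan (eigvecs (Cas (real N / 2) (real_of_int kk / 2)) (TS (real N / 2) (real_of_int kk / 2)))"
        (is "XX \<in> ?F") using h XX_TS by blast
      moreover have "\<forall>w\<in>TS (real N / 2) (real_of_int kk / 2). fs w" using TS_fs by blast
      ultimately have "Dc (real N / 2) (real_of_int kk / 2) cc XX = (\<lambda>x. 0)"
        using nondiag D2 by blast
      then show False using D1 by simp
    qed
  qed
qed



end
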